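(* Let $f:\mathbb{R}^n\to\mathbb{R}^n$ be locally Lipschitz, and let $V_1,V_2\in C^1(\mathbb{R}^n)$, continuous $N_1,N_2:\mathbb{R}^n\to[0,\infty)$, and continuous $h:[0,\infty)\to[0,\infty)$ with $h(0)=0$ and $\sup_{r>0}h(r)/r<\infty$ satisfy $\nabla V_1\cdot f\le -N_1$ and $\nabla V_2\cdot f\le -N_2+h(N_1)$ on $\mathbb{R}^n$. Assume every solution is defined and bounded on $[0,\infty)$ and that along every solution the maps $t\mapsto N_i(x(t))$ are uniformly continuous. If $E:=\{x:N_1(x)=0,\ N_2(x)=0\}=\{x^\ast\}$ is a singleton, then $x^\ast$ is a globally asymptotically stable equilibrium of $\dot x=f(x)$.
   Context: $x^\ast$ is globally asymptotically stable if it is Lyapunov stable (for every neighborhood $U$ of $x^\ast$ there is a neighborhood $V\subset U$ such that solutions starting in $V$ remain in $U$ for all $t\ge0$) and every solution satisfies $x(t)\to x^\ast$ as $t\to\infty$. *)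

theory Defs
  imports "HOL-Analysis.Analysis"
begin

definition is_solution :: "('a::real_normed_vector \<Rightarrow> 'a) \<Rightarrow> (real \<Rightarrow> 'a) \<Rightarrow> bool" where
  "is_solution f x \<longleftrightarrow> (\<forall>t\<ge>0. (x has_vector_derivative f (x t)) (at t within {0..}))"

definition lyapunov_stable :: "('a::real_normed_vector \<Rightarrow> 'a) \<Rightarrow> 'a \<Rightarrow> bool" where
  "lyapunov_stable f xs \<longleftrightarrow>
     (\<forall>U. open U \<and> xs \<in> U \<longrightarrow>
        (\<exists>V. open V \<and> xs \<in> V \<and> V \<subseteq> U \<and>
           (\<forall>x. is_solution f x \<and> x 0 \<in> V \<longrightarrow> (\<forall>t\<ge>0. x t \<in> U))))"

definition globally_asymptotically_stable :: "('a::real_normed_vector \<Rightarrow> 'a) \<Rightarrow> 'a \<Rightarrow> bool" where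
  "globally_asymptotically_stable f xs \<longleftrightarrow>
     lyapunov_stable f xs \<and> (\<forall>x. is_solution f x \<longrightarrow> (x \<longlongrightarrow> xs) at_top)"

end

theory Submission
  imports Defs
begin

lemma nonbot_Ici: "t0 \<ge> (0::real) \<Longrightarrow> at t0 within {0..} \<noteq> bot"
proof -
  assume t0: "t0 \<ge> 0"
  have "t0 islimpt {t0..t0+1}" by simp
  then have "t0 islimpt {0..}" by (rule islimpt_subset) (use t0 in auto)
  then show ?thesis by (simp add: trivial_limit_within)
qed

lemma const_deriv_zero:
  fixes g :: "real \<Rightarrow> 'a::real_normed_vector"
  assumes "\<forall>t\<ge>0. g t = c" "(g has_vector_derivative D) (at t0 within {0..})" "t0 \<ge> 0"
  shows "D = 0"
proof -
  have "((\<lambda>_. c) has_vector_derivative 0) (at t0 within {0..})" by simp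
  then have "(g has_vector_derivative 0) (at t0 within {0..})"
    by (rule has_vector_derivative_transform_within[where d=1]) (use assms in auto)
  then show ?thesis using vector_derivative_unique_within[OF nonbot_Ici[OF assms(3)] assms(2)] by simp
qed

lemma chain_sol:
  fixes W :: "'a::real_inner \<Rightarrow> real"
  assumes "\<And>y. (W has_derivative (\<lambda>v. G y \<bullet> v)) (at y)" "is_solution f x" "t \<ge> 0"
  shows "((\<lambda>t. W (x t)) has_real_derivative (G (x t) \<bullet> f (x t))) (at t within {0..})"
proof -
  have xd: "(x has_derivative (\<lambda>h. h *\<^sub>R f (x t))) (at t within {0..})"
    using assms(2,3) unfolding is_solution_def has_vector_derivative_def by auto
  have "((W \<circ> x) has_derivative ((\<lambda>v. G (x t) \<bullet> v) \<circ> (\<lambda>h. h *\<^sub>R f (x t)))) (at t within {0..})"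
    by (rule diff_chain_within[OF xd has_derivative_subset[OF assms(1)]]) auto
  moreover have "((\<lambda>v. G (x t) \<bullet> v) \<circ> (\<lambda>h. h *\<^sub>R f (x t))) = (*) (G (x t) \<bullet> f (x t))"
    by (auto simp: fun_eq_iff)
  ultimately show ?thesis unfolding has_field_derivative_def o_def by simp
qed

lemma mvt_sol:
  fixes W :: "'a::real_inner \<Rightarrow> real"
  assumes "\<And>y. (W has_derivative (\<lambda>v. G y \<bullet> v)) (at y)" "is_solution f x"
    and "\<And>y. G y \<bullet> f y \<le> - N y" "0 \<le> a" "a < b"
  shows "\<exists>z. a < z \<and> z < b \<and> W (x b) - W (x a) \<le> - (b - a) * N (x z)"
proof -
  have "\<exists>z\<in>{a<..<b}. W (x b) - W (x a) = (\<lambda>h. (G (x z) \<bullet> f (x z)) * h) (b - a)"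
  proof (rule mvt_simple[OF assms(5)])
    fix t assume "a \<le> t" "t \<le> b"
    then have "((\<lambda>t. W (x t)) has_real_derivative (G (x t) \<bullet> f (x t))) (at t within {a..b})"
      using chain_sol[OF assms(1,2), of t] assms(4) by (auto intro: has_field_derivative_subset)
    then show "((\<lambda>t. W (x t)) has_derivative (\<lambda>h. (G (x t) \<bullet> f (x t)) * h)) (at t within {a..b})"
      unfolding has_field_derivative_def by simp
  qed
  then obtain z where z: "a < z" "z < b" "W (x b) - W (x a) = (b - a) * (G (x z) \<bullet> f (x z))" by auto
  have "(b - a) * (G (x z) \<bullet> f (x z)) \<le> (b - a) * (- N (x z))"
    using assms(3)[of "x z"] assms(5) by (intro mult_left_mono) auto
  then show ?thesis using z by (intro exI[of _ z]) (auto simp: algebra_simps)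
qed

lemma barbalat:
  fixes g n :: "real \<Rightarrow> real"
  assumes nn: "\<And>t. t \<ge> 0 \<Longrightarrow> n t \<ge> 0"
    and uc: "uniformly_continuous_on {0..} n"
    and bdd: "bdd_below (g ` {0..})"
    and drop: "\<And>a b. 0 \<le> a \<Longrightarrow> a < b \<Longrightarrow> \<exists>z. a < z \<and> z < b \<and> g b - g a \<le> - (b - a) * n z"
  shows "(n \<longlongrightarrow> 0) at_top"
proof -
  have mono: "g b \<le> g a" if a0: "0 \<le> a" and ab0: "a \<le> b" for a b
  proof (cases "a = b")
    case False
    have ab: "a < b" using ab0 False by simp
    obtain z where "a < z" "z < b" "g b - g a \<le> - (b - a) * n z" using drop[OF a0 ab] by blast
    moreover have "(b - a) * n z \<ge> 0" using nn[of z] a0 ab \<open>a < z\<close> by auto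
    ultimately show ?thesis by linarith
  qed simp
  define L where "L = Inf (g ` {0..})"
  have Lle: "L \<le> g t" if "t \<ge> 0" for t
    unfolding L_def using bdd that by (auto intro: cInf_lower)
  show ?thesis
  proof (rule tendstoI)
    fix e :: real assume e: "e > 0"
    obtain d where d: "d > 0" and dd: "\<And>s t. s \<ge> 0 \<Longrightarrow> t \<ge> 0 \<Longrightarrow> dist s t < d \<Longrightarrow> dist (n s) (n t) < e / 2"
      using uc e unfolding uniformly_continuous_on_def by (metis atLeast_iff half_gt_zero)
    have "L < L + e * d / 4" using e d by simp
    have "g ` {0..} \<noteq> {}" by auto
    from cInf_lessD[OF this \<open>L < L + e * d / 4\<close>[unfolded L_def]]
    obtain T where T: "T \<ge> 0" "g T < L + e * d / 4"
      unfolding L_def by auto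
    have "n t < e" if t: "t \<ge> T" for t
    proof (rule ccontr)
      assume "\<not> n t < e"
      then have net: "n t \<ge> e" by simp
      obtain z where z: "t < z" "z < t + d / 2" "g (t + d/2) - g t \<le> - (t + d/2 - t) * n z"
        using drop[of t "t + d/2"] t T d by auto
      have "dist z t < d" using z d by (simp add: dist_real_def)
      then have "dist (n z) (n t) < e / 2" using dd[of z t] z t T by auto
      then have "n z > e / 2" using net unfolding dist_real_def by linarith
      then have k1: "(d/2) * n z > (d/2) * (e/2)" using d by simp
      have k2: "g t \<le> g T" using mono[of T t] T t by simp
      have k3: "L \<le> g (t + d/2)" using Lle[of "t + d/2"] t T d by simp
      have k4: "g (t + d/2) - g t \<le> - ((d/2) * n z)" using z(3) by simp
      have "(d/2) * (e/2) = e * d / 4" by simp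
      then show False using k1 k2 k3 k4 T by linarith
    qed
    then show "\<forall>\<^sub>F t in at_top. dist (n t) 0 < e"
      unfolding eventually_at_top_linorder
      using nn T by (intro exI[of _ T]) (auto simp: dist_real_def)
  qed
qed


lemma conv_to:
  fixes x :: "real \<Rightarrow> 'a::euclidean_space" and N :: "'a \<Rightarrow> real"
  assumes Nc: "continuous_on UNIV N" and Nn: "\<And>y. N y \<ge> 0" and N0: "\<And>y. N y = 0 \<longleftrightarrow> y = xs"
    and bx: "bounded (x ` {0..})" and lim: "((\<lambda>t. N (x t)) \<longlongrightarrow> 0) at_top"
  shows "(x \<longlongrightarrow> xs) at_top"
proof (rule ccontr)
  assume nc: "\<not> (x \<longlongrightarrow> xs) at_top"
  then obtain e where e: "e > 0" and fr: "\<not> (\<forall>\<^sub>F t in at_top. dist (x t) xs < e)"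
    unfolding tendsto_iff by auto
  have fr': "\<exists>t\<ge>T. dist (x t) xs \<ge> e" for T
    using fr unfolding eventually_at_top_linorder by (meson not_le)
  obtain R where R: "\<And>t. t \<ge> 0 \<Longrightarrow> norm (x t) \<le> R"
    using bx unfolding bounded_iff by auto
  define K where "K = cball 0 R \<inter> {y. e \<le> dist y xs}"
  have cK: "compact K" unfolding K_def
    by (intro compact_Int_closed compact_cball closed_Collect_le continuous_intros)
  obtain t0 where t0: "t0 \<ge> 0" "dist (x t0) xs \<ge> e" using fr'[of 0] by auto
  have "x t0 \<in> K" using t0 R[of t0] by (auto simp: K_def)
  then have "K \<noteq> {}" by auto
  then obtain y0 where y0: "y0 \<in> K" "\<And>y. y \<in> K \<Longrightarrow> N y0 \<le> N y"
    using continuous_attains_inf[OF cK \<open>K \<noteq> {}\<close> continuous_on_subset[OF Nc subset_UNIV]] by blast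
  have "y0 \<noteq> xs" using y0(1) e by (auto simp: K_def)
  then have pos: "N y0 > 0" using N0[of y0] Nn[of y0] by linarith
  have "\<forall>\<^sub>F t in at_top. dist (N (x t)) 0 < N y0" using lim pos by (rule tendstoD)
  then obtain T where T: "\<And>t. t \<ge> T \<Longrightarrow> N (x t) < N y0"
    unfolding eventually_at_top_linorder dist_real_def using Nn by auto
  obtain t where t: "t \<ge> max T 0" "dist (x t) xs \<ge> e" using fr' by blast
  have "x t \<in> K" using t R[of t] by (auto simp: K_def)
  then show False using y0(2)[of "x t"] T[of t] t by auto
qed


theorem corollary2p8:
  fixes f :: "real^'n \<Rightarrow> real^'n"
    and V1 V2 :: "real^'n \<Rightarrow> real"
    and gradV1 gradV2 :: "real^'n \<Rightarrow> real^'n"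
    and N1 N2 :: "real^'n \<Rightarrow> real"
    and h :: "real \<Rightarrow> real"
    and xs :: "real^'n"
  assumes f_loclip: "local_lipschitz (UNIV::real set) (UNIV::(real^'n) set) (\<lambda>_. f)"
    and V1_C1: "\<And>x. (V1 has_derivative (\<lambda>v. gradV1 x \<bullet> v)) (at x)" "continuous_on UNIV gradV1"
    and V2_C1: "\<And>x. (V2 has_derivative (\<lambda>v. gradV2 x \<bullet> v)) (at x)" "continuous_on UNIV gradV2"
    and N1_cont: "continuous_on UNIV N1" and N1_nonneg: "\<And>x. N1 x \<ge> 0"
    and N2_cont: "continuous_on UNIV N2" and N2_nonneg: "\<And>x. N2 x \<ge> 0"
    and h_cont: "continuous_on {0..} h" and h_nonneg: "\<And>r. r \<ge> 0 \<Longrightarrow> h r \<ge> 0"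
    and h_zero: "h 0 = 0"
    and h_lin: "bdd_above ((\<lambda>r. h r / r) ` {0<..})"
    and dV1: "\<And>x. gradV1 x \<bullet> f x \<le> - N1 x"
    and dV2: "\<And>x. gradV2 x \<bullet> f x \<le> - N2 x + h (N1 x)"
    and complete: "\<And>x0. \<exists>x. is_solution f x \<and> x 0 = x0"
    and bounded_sol: "\<And>x. is_solution f x \<Longrightarrow> bounded (x ` {0..})"
    and unif_N1: "\<And>x. is_solution f x \<Longrightarrow> uniformly_continuous_on {0..} (\<lambda>t. N1 (x t))"
    and unif_N2: "\<And>x. is_solution f x \<Longrightarrow> uniformly_continuous_on {0..} (\<lambda>t. N2 (x t))"
    and E_single: "{x. N1 x = 0 \<and> N2 x = 0} = {xs}"
  shows "f xs = 0 \<and> globally_asymptotically_stable f xs"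
proof -
  obtain B where B: "\<And>r. r > 0 \<Longrightarrow> h r / r \<le> B"
    using h_lin unfolding bdd_above_def by auto
  have hB: "h r \<le> max B 0 * r" if r: "r \<ge> 0" for r
  proof (cases "r = 0")
    case True then show ?thesis using h_zero by simp
  next
    case False
    then have "h r / r \<le> max B 0" using B[of r] r by simp
    then show ?thesis using False r by (simp add: divide_le_eq)
  qed
  define c where "c = max B 0 + 1"
  have c0: "c \<ge> 0" unfolding c_def by simp
  define W where "W y = c * V1 y + V2 y" for y
  define G where "G y = c *\<^sub>R gradV1 y + gradV2 y" for y
  define N where "N y = N1 y + N2 y" for y
  have WD: "(W has_derivative (\<lambda>v. G y \<bullet> v)) (at y)" for y
  proof -
    have "(W has_derivative (\<lambda>v. c * (gradV1 y \<bullet> v) + gradV2 y \<bullet> v)) (at y)"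
      unfolding W_def[abs_def] by (intro derivative_intros V1_C1(1) V2_C1(1))
    moreover have "(\<lambda>v. c * (gradV1 y \<bullet> v) + gradV2 y \<bullet> v) = (\<lambda>v. G y \<bullet> v)"
      by (auto simp: G_def fun_eq_iff inner_add_left)
    ultimately show ?thesis by simp
  qed
  have dW: "G y \<bullet> f y \<le> - N y" for y
  proof -
    have "G y \<bullet> f y = c * (gradV1 y \<bullet> f y) + gradV2 y \<bullet> f y" by (simp add: G_def inner_add_left)
    also have "\<dots> \<le> c * (- N1 y) + (- N2 y + h (N1 y))"
      using mult_left_mono[OF dV1[of y] c0] dV2[of y] by linarith
    also have "\<dots> \<le> - N y" using hB[OF N1_nonneg[of y]] by (simp add: N_def c_def algebra_simps)
    finally show ?thesis .
  qed
  have Wcont: "isCont W y" for y using has_derivative_continuous[OF WD[of y]] .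
  have Wc: "continuous_on UNIV W" by (intro continuous_at_imp_continuous_on ballI Wcont)
  have Nc: "continuous_on UNIV N" unfolding N_def[abs_def] by (intro continuous_on_add N1_cont N2_cont)
  have Nn: "N y \<ge> 0" for y using N1_nonneg[of y] N2_nonneg[of y] by (simp add: N_def)
  have N0: "N y = 0 \<longleftrightarrow> y = xs" for y
  proof -
    have "N y = 0 \<longleftrightarrow> N1 y = 0 \<and> N2 y = 0" using N1_nonneg[of y] N2_nonneg[of y] by (auto simp: N_def)
    also have "\<dots> \<longleftrightarrow> y = xs" using E_single by blast
    finally show ?thesis .
  qed
  have sol: "(x \<longlongrightarrow> xs) at_top \<and> (\<forall>a b. 0 \<le> a \<longrightarrow> a \<le> b \<longrightarrow> W (x b) \<le> W (x a))
     \<and> (\<forall>t\<ge>0. W xs \<le> W (x t))" if xsol: "is_solution f x" for x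
  proof -
    have drop: "\<exists>z. a < z \<and> z < b \<and> W (x b) - W (x a) \<le> - (b - a) * N (x z)" if "0 \<le> a" "a < b" for a b
      using mvt_sol[OF WD xsol dW that] .
    have mono: "W (x b) \<le> W (x a)" if a0: "0 \<le> a" and ab0: "a \<le> b" for a b
    proof (cases "a = b")
      case False
      have ab: "a < b" using ab0 False by simp
      obtain z where "a < z" "z < b" "W (x b) - W (x a) \<le> - (b - a) * N (x z)" using drop[OF a0 ab] by blast
      moreover have "(b - a) * N (x z) \<ge> 0" using Nn[of "x z"] ab by auto
      ultimately show ?thesis by linarith
    qed simp
    obtain R where R: "\<And>t. t \<ge> 0 \<Longrightarrow> norm (x t) \<le> R"
      using bounded_sol[OF xsol] unfolding bounded_iff by auto
    have "bounded (W ` cball 0 R)"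
      by (intro compact_imp_bounded compact_continuous_image continuous_on_subset[OF Wc] compact_cball) auto
    then have "bdd_below (W ` cball 0 R)" by (rule bounded_imp_bdd_below)
    moreover have "(\<lambda>t. W (x t)) ` {0..} \<subseteq> W ` cball 0 R" using R by auto
    ultimately have bdd: "bdd_below ((\<lambda>t. W (x t)) ` {0..})" by (rule bdd_below_mono)
    have uc: "uniformly_continuous_on {0..} (\<lambda>t. N (x t))"
      unfolding N_def by (intro uniformly_continuous_on_add unif_N1 unif_N2 xsol)
    have "((\<lambda>t. N (x t)) \<longlongrightarrow> 0) at_top"
      by (rule barbalat[OF _ uc bdd drop]) (use Nn in auto)
    then have conv: "(x \<longlongrightarrow> xs) at_top"
      by (rule conv_to[OF Nc Nn N0 bounded_sol[OF xsol]])
    have "W xs \<le> W (x t)" if t: "t \<ge> 0" for t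
    proof (rule tendsto_upperbound)
      show "((\<lambda>s. W (x s)) \<longlongrightarrow> W xs) at_top" by (rule isCont_tendsto_compose[OF Wcont conv])
      show "\<forall>\<^sub>F s in at_top. W (x s) \<le> W (x t)"
        unfolding eventually_at_top_linorder using mono t by (intro exI[of _ t]) auto
    qed simp
    then show ?thesis using conv mono by auto
  qed
  have constN: "N (x t) = 0" if xsol: "is_solution f x" and cst: "\<forall>t\<ge>0. W (x t) = W (x 0)" and t: "t \<ge> 0" for x t
  proof -
    have "((\<lambda>t. W (x t)) has_vector_derivative (G (x t) \<bullet> f (x t))) (at t within {0..})"
      using chain_sol[OF WD xsol t] by (simp add: has_real_derivative_iff_has_vector_derivative)
    then have "G (x t) \<bullet> f (x t) = 0" using const_deriv_zero[OF cst _ t] by blast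
    then show ?thesis using dW[of "x t"] Nn[of "x t"] by linarith
  qed
  have Wstrict: "W y > W xs" if y: "y \<noteq> xs" for y
  proof (rule ccontr)
    assume "\<not> W y > W xs"
    obtain x where xsol: "is_solution f x" and x0: "x 0 = y" using complete by blast
    have "\<forall>t\<ge>0. W (x t) = W (x 0)"
    proof (intro allI impI)
      fix t :: real assume t: "t \<ge> 0"
      have "W (x t) \<le> W (x 0)" using sol[OF xsol] t by auto
      moreover have "W xs \<le> W (x t)" using sol[OF xsol] t by auto
      ultimately show "W (x t) = W (x 0)" using \<open>\<not> W y > W xs\<close> unfolding x0 by linarith
    qed
    then have "N (x 0) = 0" using constN[OF xsol _ order_refl] by blast
    then show False using N0 x0 y by simp
  qed
  have fxs: "f xs = 0"
  proof -
    obtain x where xsol: "is_solution f x" and x0: "x 0 = xs" using complete by blast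
    have cst: "\<forall>t\<ge>0. W (x t) = W (x 0)"
    proof (intro allI impI)
      fix t :: real assume t: "t \<ge> 0"
      have "W (x t) \<le> W (x 0)" using sol[OF xsol] t by auto
      moreover have "W xs \<le> W (x t)" using sol[OF xsol] t by auto
      ultimately show "W (x t) = W (x 0)" unfolding x0 by linarith
    qed
    have xc: "\<forall>t\<ge>0. x t = xs" using constN[OF xsol cst] N0 by blast
    have "(x has_vector_derivative f (x 0)) (at 0 within {0..})" using xsol unfolding is_solution_def by simp
    then have "f (x 0) = 0" by (rule const_deriv_zero[OF xc]) simp
    then show ?thesis using x0 by simp
  qed
  have stable: "lyapunov_stable f xs"
    unfolding lyapunov_stable_def
  proof (intro allI impI)
    fix U assume U: "open U \<and> xs \<in> U"
    then obtain r where r: "r > 0" "cball xs r \<subseteq> U" using open_contains_cball by blast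
    obtain m where m: "m > 0" "\<And>y. y \<in> sphere xs r \<Longrightarrow> W y - W xs \<ge> m"
    proof (cases "sphere xs r = {}")
      case True then show ?thesis using that[of 1] by auto
    next
      case False
      then obtain y0 where y0: "y0 \<in> sphere xs r" "\<And>y. y \<in> sphere xs r \<Longrightarrow> W y0 \<le> W y"
        using continuous_attains_inf[OF compact_sphere False continuous_on_subset[OF Wc subset_UNIV]] by blast
      have "y0 \<noteq> xs" using y0(1) r by auto
      then have "W y0 - W xs > 0" using Wstrict by simp
      then show ?thesis using that[of "W y0 - W xs"] y0(2) by force
    qed
    obtain d where d: "d > 0" "\<And>y. dist y xs < d \<Longrightarrow> dist (W y) (W xs) < m"
      using Wcont[of xs] m(1) unfolding continuous_at_eps_delta by blast
    show "\<exists>V. open V \<and> xs \<in> V \<and> V \<subseteq> U \<and> (\<forall>x. is_solution f x \<and> x 0 \<in> V \<longrightarrow> (\<forall>t\<ge>0. x t \<in> U))"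
    proof (intro exI[of _ "ball xs (min d r)"] conjI allI impI)
      show "open (ball xs (min d r))" by simp
      show "xs \<in> ball xs (min d r)" using d r by simp
      show "ball xs (min d r) \<subseteq> U" using r by auto
      fix x t assume xa: "is_solution f x \<and> x 0 \<in> ball xs (min d r)" and t: "(t::real) \<ge> 0"
      then have xsol: "is_solution f x" and x0: "dist xs (x 0) < min d r" by auto
      have W0: "W (x 0) < W xs + m" using d(2)[of "x 0"] x0 by (simp add: dist_commute dist_real_def)
      have xcont: "continuous_on {0..} x"
        unfolding continuous_on_eq_continuous_within
        using xsol unfolding is_solution_def by (auto intro: has_vector_derivative_continuous)
      have "dist xs (x t) < r"
      proof (rule ccontr)
        assume "\<not> dist xs (x t) < r"
        then have "r \<le> dist xs (x t)" by simp
        moreover have "dist xs (x 0) \<le> r" using x0 by simp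
        moreover have "continuous_on {0..t} (\<lambda>s. dist xs (x s))"
          by (intro continuous_intros continuous_on_subset[OF xcont]) auto
        ultimately obtain s where s: "0 \<le> s" "s \<le> t" "dist xs (x s) = r"
          using IVT'[of "\<lambda>s. dist xs (x s)" 0 r t] t by auto
        have "W (x s) - W xs \<ge> m" using m(2)[of "x s"] s by simp
        moreover have "W (x s) \<le> W (x 0)" using sol[OF xsol] s by auto
        ultimately show False using W0 by linarith
      qed
      then show "x t \<in> U" using r by auto
    qed
  qed
  show ?thesis
    unfolding globally_asymptotically_stable_def using fxs stable sol by blast
qed

end
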